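(* Let $\tau$ be a type and let $\mathcal F$ be a $2$-capturing construction scheme over $\omega_1$ of type $\tau$. For $\alpha\in\omega_1$ let $f_\alpha:\omega\to\omega$ be $f_\alpha(l)=|(\alpha)_l|$, and let $\mathcal B_{\mathcal F}=\{f_\alpha\}_{\alpha\in\omega_1}$, ordered by $f\le g$ iff $f(n)\le g(n)$ for all $n$. Then $(\mathcal B_{\mathcal F},\le)$ is a sixth Tukey type, i.e. it is a directed partial order of cardinality $\omega_1$ which is not Tukey equivalent to any of $1$, $\omega$, $\omega_1$, $\omega\times\omega_1$, $[\omega_1]^{<\omega}$ (with their natural orders).
   Context: For directed partial orders $D,E$, $E\le_T D$ if there is $\phi:D\to E$ mapping cofinal subsets of $D$ to cofinal subsets of $E$; $E\equiv_T D$ if $E\le_T D$ and $D\le_T E$. A type is a sequence $\tau=\{(m_k,n_{k+1},r_{k+1})\}_{k\in\omega}$ of natural numbers with $m_0=1$; $n_k\ge2$ for $k\ge1$; every $r\in\omega$ equals $r_k$ for infinitely many $k$; $m_k>r_{k+1}$; and $m_{k+1}=r_{k+1}+(m_k-r_{k+1})n_{k+1}$ for all $k$. For a set of ordinals $X$ and $\mathcal F\subseteq[X]^{<\omega}$, $\mathcal F_k$ is the set of elements of rank $k$ in $(\mathcal F,\subsetneq)$; $A\sqsubseteq B$ means $A\subseteq B$ and every element of $B$ below an element of $A$ is in $A$; $A<B$ means every element of $A$ is below every element of $B$. $\mathcal F$ is a construction scheme over $X$ of type $\tau$ if (1) every finite subset of $X$ lies in a member of $\mathcal F$; (2) $|F|=m_k$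 for $F\in\mathcal F_k$; (3) $E\cap F\sqsubseteq E,F$ for $E,F\in\mathcal F_k$; (4) each $F\in\mathcal F_{k+1}$ is the union of uniquely determined $F_0,\dots,F_{n_{k+1}-1}\in\mathcal F_k$ forming a $\Delta$-system with root $R(F)$, $|R(F)|=r_{k+1}$, $R(F)<F_0\setminus R(F)<\dots<F_{n_{k+1}-1}\setminus R(F)$. Let $\rho(\alpha,\beta)=\min\{k:\exists F\in\mathcal F_k\,(\{\alpha,\beta\}\subseteq F)\}$ and $(\alpha)_k=\{\xi\le\alpha:\rho(\xi,\alpha)\le k\}$. For $l\ge1$, $F\in\mathcal F_l$ and finite $\mathcal C\subseteq[\omega_1]^{<\omega}$: $F$ captures $\mathcal C$ if $|\mathcal C|\le n_l$ and $\mathcal C$ can be enumerated as $\{c_i\}_{i<|\mathcal C|}$ with $c_i\subseteq F_i$, $c_i\setminus R(F)\neq\emptyset$ and $\phi_i[c_0]=c_i$ where $\phi_i:F_0\to F_i$ is the increasing bijection. $\mathcal F$ is $2$-capturing if for every uncountable $S\subseteq[\omega_1]^{<\omega}$ and every $k\in\omega$ there are $\mathcal C\in[S]^2$, $l>k$ and $F\in\mathcal F_l$ capturing $\mathcal C$. *)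

theory Defs
  imports "HOL-Library.Countable_Set"
begin

text \<open>A type tau = ((m k, n (k+1), r (k+1)))_k, given by three sequences; n and r are
  only meaningful from index 1 on.\<close>
definition is_type :: "(nat \<Rightarrow> nat) \<Rightarrow> (nat \<Rightarrow> nat) \<Rightarrow> (nat \<Rightarrow> nat) \<Rightarrow> bool" where
  "is_type m n r \<longleftrightarrow>
     m 0 = 1 \<and>
     (\<forall>k\<ge>1. n k \<ge> 2) \<and>
     (\<forall>q. infinite {k. k \<ge> 1 \<and> r k = q}) \<and>
     (\<forall>k. m k > r (Suc k)) \<and>
     (\<forall>k. m (Suc k) = r (Suc k) + (m k - r (Suc k)) * n (Suc k))"

definition rank_chain :: "'a set set \<Rightarrow> 'a set list \<Rightarrow> bool" where
  "rank_chain \<F> cs \<longleftrightarrow> set cs \<subseteq> \<F> \<and> sorted_wrt (\<subset>) cs"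

text \<open>level F k = elements of rank k: the longest strictly increasing chain in F ending at
  the element has exactly k+1 members.\<close>
definition level :: "'a set set \<Rightarrow> nat \<Rightarrow> 'a set set" where
  "level \<F> k = {F \<in> \<F>.
      (\<exists>cs. rank_chain \<F> cs \<and> cs \<noteq> [] \<and> last cs = F \<and> length cs = Suc k) \<and>
      (\<forall>cs. rank_chain \<F> cs \<and> cs \<noteq> [] \<and> last cs = F \<longrightarrow> length cs \<le> Suc k)}"

definition initial_seg :: "'a::linorder set \<Rightarrow> 'a set \<Rightarrow> bool" where
  "initial_seg A B \<longleftrightarrow> A \<subseteq> B \<and> (\<forall>b\<in>B. \<forall>a\<in>A. b < a \<longrightarrow> b \<in> A)"

definition set_less :: "'a::linorder set \<Rightarrow> 'a set \<Rightarrow> bool" where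
  "set_less A B \<longleftrightarrow> (\<forall>a\<in>A. \<forall>b\<in>B. a < b)"

text \<open>F (of rank k+1) is the union of Fs 0, ..., Fs (n(k+1)-1) of rank k, a Delta-system
  with root R as in clause (4). Fs is set to empty beyond n(k+1) to make it unique.\<close>
definition decomp :: "'a::linorder set set \<Rightarrow> (nat \<Rightarrow> nat) \<Rightarrow> (nat \<Rightarrow> nat) \<Rightarrow> nat
    \<Rightarrow> 'a set \<Rightarrow> (nat \<Rightarrow> 'a set) \<Rightarrow> 'a set \<Rightarrow> bool" where
  "decomp \<F> n r k F Fs R \<longleftrightarrow>
     (\<forall>i<n (Suc k). Fs i \<in> level \<F> k) \<and>
     (\<forall>i\<ge>n (Suc k). Fs i = {}) \<and>
     F = (\<Union>i<n (Suc k). Fs i) \<and>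
     (\<forall>i<n (Suc k). \<forall>j<n (Suc k). i \<noteq> j \<longrightarrow> Fs i \<inter> Fs j = R) \<and>
     card R = r (Suc k) \<and>
     set_less R (Fs 0 - R) \<and>
     (\<forall>i. Suc i < n (Suc k) \<longrightarrow> set_less (Fs i - R) (Fs (Suc i) - R))"

section \<open>Construction schemes (over the whole type, which plays the role of X)\<close>

definition construction_scheme :: "'a::linorder set set \<Rightarrow> (nat \<Rightarrow> nat) \<Rightarrow> (nat \<Rightarrow> nat)
    \<Rightarrow> (nat \<Rightarrow> nat) \<Rightarrow> bool" where
  "construction_scheme \<F> m n r \<longleftrightarrow>
     (\<forall>F\<in>\<F>. finite F) \<and>
     (\<forall>A. finite A \<longrightarrow> (\<exists>F\<in>\<F>. A \<subseteq> F)) \<and>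
     (\<forall>k. \<forall>F\<in>level \<F> k. card F = m k) \<and>
     (\<forall>k. \<forall>E\<in>level \<F> k. \<forall>F\<in>level \<F> k. initial_seg (E \<inter> F) E \<and> initial_seg (E \<inter> F) F) \<and>
     (\<forall>k. \<forall>F\<in>level \<F> (Suc k). \<exists>!Fs. \<exists>R. decomp \<F> n r k F Fs R)"

definition incr_bij :: "'a::linorder set \<Rightarrow> 'a set \<Rightarrow> ('a \<Rightarrow> 'a) \<Rightarrow> bool" where
  "incr_bij A B f \<longleftrightarrow> bij_betw f A B \<and> strict_mono_on A f"

definition captures :: "'a::linorder set set \<Rightarrow> (nat \<Rightarrow> nat) \<Rightarrow> (nat \<Rightarrow> nat) \<Rightarrow> nat
    \<Rightarrow> 'a set \<Rightarrow> 'a set set \<Rightarrow> bool" where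
  "captures \<F> n r l F \<C> \<longleftrightarrow>
     l \<ge> 1 \<and> F \<in> level \<F> l \<and> finite \<C> \<and> card \<C> \<le> n l \<and>
     (\<exists>Fs R c. decomp \<F> n r (l - 1) F Fs R \<and>
        \<C> = c ` {..<card \<C>} \<and> inj_on c {..<card \<C>} \<and>
        (\<forall>i<card \<C>. c i \<subseteq> Fs i \<and> c i - R \<noteq> {} \<and>
            (\<exists>\<phi>. incr_bij (Fs 0) (Fs i) \<phi> \<and> \<phi> ` c 0 = c i)))"

definition two_capturing :: "'a::linorder set set \<Rightarrow> (nat \<Rightarrow> nat) \<Rightarrow> (nat \<Rightarrow> nat) \<Rightarrow> bool" where
  "two_capturing \<F> n r \<longleftrightarrow>
     (\<forall>S. S \<subseteq> {A. finite A} \<and> uncountable S \<longrightarrow>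
        (\<forall>k. \<exists>\<C>. \<C> \<subseteq> S \<and> card \<C> = 2 \<and>
              (\<exists>l>k. \<exists>F\<in>level \<F> l. captures \<F> n r l F \<C>)))"

definition rho :: "'a set set \<Rightarrow> 'a \<Rightarrow> 'a \<Rightarrow> nat" where
  "rho \<F> \<alpha> \<beta> = (LEAST k. \<exists>F\<in>level \<F> k. {\<alpha>, \<beta>} \<subseteq> F)"

definition cone :: "'a::linorder set set \<Rightarrow> 'a \<Rightarrow> nat \<Rightarrow> 'a set" where
  "cone \<F> \<alpha> k = {\<xi>. \<xi> \<le> \<alpha> \<and> rho \<F> \<xi> \<alpha> \<le> k}"

definition fseq :: "'a::linorder set set \<Rightarrow> 'a \<Rightarrow> nat \<Rightarrow> nat" where
  "fseq \<F> \<alpha> = (\<lambda>l. card (cone \<F> \<alpha> l))"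

definition directed_po :: "'d set \<Rightarrow> ('d \<Rightarrow> 'd \<Rightarrow> bool) \<Rightarrow> bool" where
  "directed_po D le \<longleftrightarrow>
     (\<forall>x\<in>D. le x x) \<and>
     (\<forall>x\<in>D. \<forall>y\<in>D. le x y \<and> le y x \<longrightarrow> x = y) \<and>
     (\<forall>x\<in>D. \<forall>y\<in>D. \<forall>z\<in>D. le x y \<and> le y z \<longrightarrow> le x z) \<and>
     (\<forall>x\<in>D. \<forall>y\<in>D. \<exists>z\<in>D. le x z \<and> le y z)"

definition cofinal_in :: "'d set \<Rightarrow> ('d \<Rightarrow> 'd \<Rightarrow> bool) \<Rightarrow> 'd set \<Rightarrow> bool" where
  "cofinal_in D le C \<longleftrightarrow> C \<subseteq> D \<and> (\<forall>d\<in>D. \<exists>c\<in>C. le d c)"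

text \<open>tukey_le E leE D leD: E \<le>_T D, i.e. some map D \<rightarrow> E sends cofinal subsets of D
  to cofinal subsets of E.\<close>
definition tukey_le :: "'e set \<Rightarrow> ('e \<Rightarrow> 'e \<Rightarrow> bool) \<Rightarrow> 'd set \<Rightarrow> ('d \<Rightarrow> 'd \<Rightarrow> bool) \<Rightarrow> bool" where
  "tukey_le E leE D leD \<longleftrightarrow>
     (\<exists>\<phi>. \<phi> ` D \<subseteq> E \<and> (\<forall>C. cofinal_in D leD C \<longrightarrow> cofinal_in E leE (\<phi> ` C)))"

definition tukey_eq :: "'d set \<Rightarrow> ('d \<Rightarrow> 'd \<Rightarrow> bool) \<Rightarrow> 'e set \<Rightarrow> ('e \<Rightarrow> 'e \<Rightarrow> bool) \<Rightarrow> bool" where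
  "tukey_eq D leD E leE \<longleftrightarrow> tukey_le E leE D leD \<and> tukey_le D leD E leE"

definition prod_le :: "('a::order \<times> 'b::order) \<Rightarrow> ('a \<times> 'b) \<Rightarrow> bool" where
  "prod_le p q \<longleftrightarrow> fst p \<le> fst q \<and> snd p \<le> snd q"

end

theory Submission
  imports Defs
begin
lemma chain_len_bound:
  assumes "rank_chain FF cs" "cs \<noteq> []" "last cs = F" "finite F"
  shows "length cs \<le> Suc (card F)"
proof -
  have sw: "sorted_wrt (\<subset>) cs" using assms(1) unfolding rank_chain_def by auto
  have sub: "\<forall>c\<in>set cs. c \<subseteq> F"
  proof
    fix c assume c: "c \<in> set cs"
    have "cs = butlast cs @ [last cs]" using assms(2) by simp
    then have "sorted_wrt (\<subset>) (butlast cs @ [F])" using sw assms(3) by metis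
    then have "\<forall>x\<in>set (butlast cs). x \<subset> F" by (simp add: sorted_wrt_append)
    moreover have "c \<in> set (butlast cs) \<or> c = F"
      using c assms(2,3) by (metis append_butlast_last_id butlast_snoc in_set_butlast_appendI rotate1.simps(2) set_ConsD set_rotate1)
    ultimately show "c \<subseteq> F" by auto
  qed
  have fin: "\<forall>c\<in>set cs. finite c" using sub assms(4) finite_subset by blast
  have "sorted_wrt (<) (map card cs)"
    unfolding sorted_wrt_map
    by (rule sorted_wrt_mono_rel[OF _ sw]) (use fin in \<open>auto intro: psubset_card_mono\<close>)
  then have d: "distinct (map card cs)" by (simp add: strict_sorted_iff)
  have "set (map card cs) \<subseteq> {..card F}" using sub assms(4) by (auto intro: card_mono)
  then have "card (set (map card cs)) \<le> Suc (card F)"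
    by (metis card_atMost card_mono finite_atMost)
  with d show ?thesis by (metis distinct_card length_map set_map)
qed

lemma in_some_level:
  assumes "F \<in> FF" "finite F"
  shows "\<exists>k. F \<in> level FF k"
proof -
  let ?L = "{length cs | cs. rank_chain FF cs \<and> cs \<noteq> [] \<and> last cs = F}"
  have "1 \<in> ?L" using assms(1) by (auto simp: rank_chain_def intro!: exI[of _ "[F]"])
  have bd: "\<forall>x\<in>?L. x \<le> Suc (card F)" using chain_len_bound assms(2) by blast
  then have fin: "finite ?L" by (meson finite_atMost finite_subset subsetI atMost_iff)
  have ne: "?L \<noteq> {}" using \<open>1 \<in> ?L\<close> by blast
  have mx: "Max ?L \<in> ?L" using Max_in[OF fin ne] .
  have pos: "Max ?L \<ge> 1" using \<open>1 \<in> ?L\<close> fin Max_ge by blast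
  define k where "k = Max ?L - 1"
  have "F \<in> level FF k"
    unfolding level_def
  proof (intro CollectI conjI)
    show "F \<in> FF" by fact
    show "\<exists>cs. rank_chain FF cs \<and> cs \<noteq> [] \<and> last cs = F \<and> length cs = Suc k"
      using mx pos unfolding k_def by auto
    show "\<forall>cs. rank_chain FF cs \<and> cs \<noteq> [] \<and> last cs = F \<longrightarrow> length cs \<le> Suc k"
      using fin pos unfolding k_def by (auto intro!: Max_ge)
  qed
  then show ?thesis by blast
qed


locale cs =
  fixes FF :: "'a::wellorder set set" and m n r :: "nat \<Rightarrow> nat"
  assumes tau: "is_type m n r" and scheme: "construction_scheme FF m n r"
  and infU: "infinite (UNIV::'a set)"
begin

lemma finF: "F \<in> FF \<Longrightarrow> finite F"
  using scheme unfolding construction_scheme_def by auto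

lemma level_sub: "F \<in> level FF k \<Longrightarrow> F \<in> FF"
  unfolding level_def by auto

lemma level_fin: "F \<in> level FF k \<Longrightarrow> finite F"
  using finF level_sub by blast

lemma level_card: "F \<in> level FF k \<Longrightarrow> card F = m k"
  using scheme unfolding construction_scheme_def by auto

lemma coh: "E \<in> level FF k \<Longrightarrow> F \<in> level FF k \<Longrightarrow> initial_seg (E \<inter> F) E"
  using scheme unfolding construction_scheme_def by auto

lemma decomp_ex: "F \<in> level FF (Suc k) \<Longrightarrow> \<exists>Fs R. decomp FF n r k F Fs R"
  using scheme unfolding construction_scheme_def by blast

lemma n_ge2: "n (Suc k) \<ge> 2"
  using tau unfolding is_type_def by auto

lemma r_less: "r (Suc k) < m k"
  using tau unfolding is_type_def by auto

lemma m_Suc: "m (Suc k) = r (Suc k) + (m k - r (Suc k)) * n (Suc k)"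
  using tau unfolding is_type_def by auto

lemma m_less: "m k < m (Suc k)"
proof -
  have "(m k - r (Suc k)) * 2 \<le> (m k - r (Suc k)) * n (Suc k)"
    using n_ge2 by (intro mult_le_mono2) auto
  then show ?thesis using m_Suc[of k] r_less[of k] by linarith
qed

lemma m_smono: "strict_mono m"
  using m_less by (simp add: strict_mono_Suc_iff)

lemma down1:
  assumes "F \<in> level FF (Suc k)" "x \<in> F"
  shows "\<exists>H\<in>level FF k. H \<subseteq> F \<and> x \<in> H"
proof -
  obtain Fs R where d: "decomp FF n r k F Fs R" using decomp_ex assms(1) by blast
  then have "F = (\<Union>i<n (Suc k). Fs i)" "\<forall>i<n (Suc k). Fs i \<in> level FF k"
    unfolding decomp_def by auto
  with assms(2) show ?thesis by blast
qed

lemma down: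
  assumes "F \<in> level FF k" "j \<le> k" "x \<in> F"
  shows "\<exists>H\<in>level FF j. H \<subseteq> F \<and> x \<in> H"
  using assms
proof (induction k arbitrary: F)
  case 0
  then show ?case by auto
next
  case (Suc k)
  show ?case
  proof (cases "j = Suc k")
    case True
    then show ?thesis using Suc.prems by auto
  next
    case False
    then have "j \<le> k" using Suc.prems by auto
    obtain H where H: "H \<in> level FF k" "H \<subseteq> F" "x \<in> H" using down1 Suc.prems by blast
    obtain H' where "H' \<in> level FF j" "H' \<subseteq> H" "x \<in> H'" using Suc.IH[OF H(1) \<open>j \<le> k\<close> H(3)] by blast
    then show ?thesis using H by blast
  qed
qed

lemma finite_in_level:
  assumes "finite A"
  shows "\<exists>k. \<exists>G\<in>level FF k. A \<subseteq> G"
proof -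
  obtain F where "F \<in> FF" "A \<subseteq> F" using scheme assms unfolding construction_scheme_def by blast
  moreover then obtain k where "F \<in> level FF k" using in_some_level finF by blast
  ultimately show ?thesis by blast
qed

lemma ex_level: "\<exists>G\<in>level FF k. x \<in> G"
proof -
  obtain B :: "'a set" where B: "finite B" "card B = Suc (m k)"
    using infinite_arbitrarily_large[OF infU] by blast
  obtain k' G where G: "G \<in> level FF k'" "insert x B \<subseteq> G" using finite_in_level[of "insert x B"] B by auto
  have "B \<subseteq> G" using G(2) by auto
  then have "card B \<le> card G" using level_fin[OF G(1)] card_mono by blast
  then have "m k < m k'" using B G level_card by auto
  then have "k \<le> k'" using m_smono by (metis leI less_asym strict_mono_less)
  then show ?thesis using down[OF G(1)] G(2) by blast
qed

lemma transfer:
  assumes "E \<in> level FF j" "\<xi> \<in> E" "\<alpha> \<in> E" "\<xi> \<le> \<alpha>" "G \<in> level FF k" "\<alpha> \<in> G" "j \<le> k"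
  shows "\<xi> \<in> G"
proof (cases "\<xi> = \<alpha>")
  case True then show ?thesis using assms by simp
next
  case False
  obtain H where H: "H \<in> level FF j" "H \<subseteq> G" "\<alpha> \<in> H" using down assms by blast
  have "initial_seg (E \<inter> H) E" using coh assms(1) H(1) by blast
  moreover have "\<xi> < \<alpha>" using assms(4) False by simp
  ultimately have "\<xi> \<in> E \<inter> H" using assms(2) H(3) assms(3) unfolding initial_seg_def by blast
  then show ?thesis using H by auto
qed

lemma rho_le: "G \<in> level FF k \<Longrightarrow> \<xi> \<in> G \<Longrightarrow> \<alpha> \<in> G \<Longrightarrow> rho FF \<xi> \<alpha> \<le> k"
  unfolding rho_def by (rule Least_le) auto

lemma rho_ex: "\<exists>E\<in>level FF (rho FF \<xi> \<alpha>). {\<xi>, \<alpha>} \<subseteq> E"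
proof -
  obtain k G where "G \<in> level FF k" "{\<xi>,\<alpha>} \<subseteq> G" using finite_in_level[of "{\<xi>,\<alpha>}"] by auto
  then have "\<exists>k. \<exists>F\<in>level FF k. {\<xi>,\<alpha>} \<subseteq> F" by blast
  from LeastI_ex[OF this] show ?thesis unfolding rho_def .
qed

lemma cone_eq:
  assumes "G \<in> level FF k" "\<alpha> \<in> G"
  shows "cone FF \<alpha> k = G \<inter> {..\<alpha>}"
proof
  show "G \<inter> {..\<alpha>} \<subseteq> cone FF \<alpha> k"
    using rho_le assms unfolding cone_def by auto
  show "cone FF \<alpha> k \<subseteq> G \<inter> {..\<alpha>}"
  proof
    fix \<xi> assume "\<xi> \<in> cone FF \<alpha> k"
    then have x: "\<xi> \<le> \<alpha>" "rho FF \<xi> \<alpha> \<le> k" unfolding cone_def by auto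
    obtain E where "E \<in> level FF (rho FF \<xi> \<alpha>)" "{\<xi>, \<alpha>} \<subseteq> E" using rho_ex by blast
    then have "\<xi> \<in> G" using transfer[of E _ \<xi> \<alpha> G k] x assms by auto
    then show "\<xi> \<in> G \<inter> {..\<alpha>}" using x by auto
  qed
qed

lemma fseq_eq:
  assumes "G \<in> level FF k" "\<alpha> \<in> G"
  shows "fseq FF \<alpha> k = card (G \<inter> {..\<alpha>})"
  using cone_eq[OF assms] unfolding fseq_def by simp

lemma fseq_le_m: "fseq FF \<alpha> k \<le> m k"
proof -
  obtain G where G: "G \<in> level FF k" "\<alpha> \<in> G" using ex_level by blast
  then have "card (G \<inter> {..\<alpha>}) \<le> card G" using level_fin by (intro card_mono) auto
  then show ?thesis using fseq_eq[OF G] level_card[OF G(1)] by simp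
qed

lemma fseq_mono_level:
  assumes "E \<in> level FF k" "\<alpha> \<in> E" "\<gamma> \<in> E" "\<alpha> \<le> \<gamma>" "k \<le> j"
  shows "fseq FF \<alpha> j \<le> fseq FF \<gamma> j"
proof -
  obtain G where G: "G \<in> level FF j" "\<gamma> \<in> G" using ex_level by blast
  have a: "\<alpha> \<in> G" using transfer[OF assms(1,2,3,4) G(1,2) assms(5)] .
  have "G \<inter> {..\<alpha>} \<subseteq> G \<inter> {..\<gamma>}" using assms(4) by auto
  then show ?thesis using fseq_eq[OF G] fseq_eq[OF G(1) a] level_fin[OF G(1)] by (simp add: card_mono)
qed

lemma fseq_smono_level:
  assumes "E \<in> level FF k" "\<alpha> \<in> E" "\<gamma> \<in> E" "\<alpha> < \<gamma>" "k \<le> j"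
  shows "fseq FF \<alpha> j < fseq FF \<gamma> j"
proof -
  obtain G where G: "G \<in> level FF j" "\<gamma> \<in> G" using ex_level by blast
  have a: "\<alpha> \<in> G" using transfer[OF assms(1,2,3) _ G(1,2) assms(5)] assms(4) by simp
  have "\<gamma> \<in> G \<inter> {..\<gamma>}" "\<gamma> \<notin> G \<inter> {..\<alpha>}" using assms(4) G(2) by auto
  moreover have "G \<inter> {..\<alpha>} \<subseteq> G \<inter> {..\<gamma>}" using assms(4) by auto
  ultimately have "G \<inter> {..\<alpha>} \<subset> G \<inter> {..\<gamma>}" by blast
  then show ?thesis using fseq_eq[OF G] fseq_eq[OF G(1) a] level_fin[OF G(1)] by (simp add: psubset_card_mono)
qed

lemma fseq_le_imp:
  assumes "fseq FF \<alpha> \<le> fseq FF \<gamma>"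
  shows "\<alpha> \<le> \<gamma>"
proof (rule ccontr)
  assume "\<not> \<alpha> \<le> \<gamma>"
  then have lt: "\<gamma> < \<alpha>" by simp
  obtain k G where G: "G \<in> level FF k" "{\<gamma>,\<alpha>} \<subseteq> G" using finite_in_level[of "{\<gamma>,\<alpha>}"] by auto
  have "fseq FF \<gamma> k < fseq FF \<alpha> k" using fseq_smono_level[of G k \<gamma> \<alpha> k] G lt by auto
  moreover have "fseq FF \<alpha> k \<le> fseq FF \<gamma> k" using assms by (simp add: le_fun_def)
  ultimately show False by simp
qed

lemma fseq_inj: "inj (fseq FF)"
  by (rule injI) (metis fseq_le_imp order.antisym order.refl)

lemma directed:
  "\<exists>\<gamma>. fseq FF \<alpha> \<le> fseq FF \<gamma> \<and> fseq FF \<beta> \<le> fseq FF \<gamma>"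
proof -
  obtain k E where E: "E \<in> level FF k" "{\<alpha>,\<beta>} \<subseteq> E" using finite_in_level[of "{\<alpha>,\<beta>}"] by auto
  have fE: "finite E" using level_fin E(1) .
  define \<gamma> where "\<gamma> = Max E"
  have gE: "\<gamma> \<in> E" using fE E(2) unfolding \<gamma>_def by (intro Max_in) auto
  have ge: "\<forall>x\<in>E. x \<le> \<gamma>" using fE unfolding \<gamma>_def by auto
  have top: "fseq FF \<gamma> j = m j" if jk: "j \<le> k" for j
  proof -
    obtain H where H: "H \<in> level FF j" "H \<subseteq> E" "\<gamma> \<in> H" using down[OF E(1) jk gE] by blast
    have "H \<inter> {..\<gamma>} = H" using H ge by auto
    then show ?thesis using fseq_eq[OF H(1,3)] level_card[OF H(1)] by simp
  qed
  have "fseq FF x \<le> fseq FF \<gamma>" if "x \<in> E" for x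
    unfolding le_fun_def
  proof
    fix j show "fseq FF x j \<le> fseq FF \<gamma> j"
    proof (cases "j \<le> k")
      case True then show ?thesis using top fseq_le_m by simp
    next
      case False then show ?thesis using fseq_mono_level[OF E(1) that gE] ge that by simp
    qed
  qed
  then show ?thesis using E(2) by auto
qed

end

locale blocks =
  fixes Fs :: "nat \<Rightarrow> 'a::linorder set" and N M rr :: nat and R E :: "'a set"
  assumes fin: "\<forall>i<N. finite (Fs i)"
    and cardF: "\<forall>i<N. card (Fs i) = M"
    and cR: "card R = rr" and rrM: "rr < M"
    and inter: "\<forall>i<N. \<forall>j<N. i \<noteq> j \<longrightarrow> Fs i \<inter> Fs j = R"
    and N2: "2 \<le> N"
    and R0: "set_less R (Fs 0 - R)"
    and chain: "\<forall>i. Suc i < N \<longrightarrow> set_less (Fs i - R) (Fs (Suc i) - R)"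
    and Edef: "E = (\<Union>i<N. Fs i)"
begin

lemma RsubF: "i < N \<Longrightarrow> R \<subseteq> Fs i"
proof -
  assume i: "i < N"
  define j :: nat where "j = (if i = 0 then 1 else 0)"
  have "j < N" "i \<noteq> j" using N2 i unfolding j_def by auto
  then show ?thesis using inter i by blast
qed

lemma finR: "finite R"
proof -
  have "R \<subseteq> Fs 0" "finite (Fs 0)" using RsubF[of 0] fin N2 by auto
  then show ?thesis using finite_subset by blast
qed

lemma finE: "finite E"
  using fin Edef by auto

lemma blk_card: "i < N \<Longrightarrow> card (Fs i - R) = M - rr"
  using RsubF cardF cR finR by (simp add: card_Diff_subset)

lemma blk_ne: "i < N \<Longrightarrow> Fs i - R \<noteq> {}"
proof
  assume "i < N" "Fs i - R = {}"
  then have "card (Fs i - R) = 0" by (simp only: card.empty)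
  then show False using blk_card[OF \<open>i < N\<close>] rrM by simp
qed

lemma blk_less: "a < b \<Longrightarrow> b < N \<Longrightarrow> set_less (Fs a - R) (Fs b - R)"
proof (induction b)
  case 0 then show ?case by simp
next
  case (Suc b)
  show ?case
  proof (cases "a = b")
    case True then show ?thesis using chain Suc.prems by auto
  next
    case False
    then have ab: "a < b" using Suc.prems by simp
    have IH: "set_less (Fs a - R) (Fs b - R)" using Suc.IH ab Suc.prems by simp
    have ch: "set_less (Fs b - R) (Fs (Suc b) - R)" using chain Suc.prems by simp
    obtain w where w: "w \<in> Fs b - R" using blk_ne[of b] Suc.prems by auto
    show ?thesis unfolding set_less_def
    proof (intro ballI)
      fix x y assume "x \<in> Fs a - R" "y \<in> Fs (Suc b) - R"
      then have "x < w" "w < y" using IH ch w unfolding set_less_def by auto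
      then show "x < y" by simp
    qed
  qed
qed

lemma R_less: "a < N \<Longrightarrow> set_less R (Fs a - R)"
proof (cases "a = 0")
  case True then show ?thesis using R0 by simp
next
  case False
  assume a: "a < N"
  obtain w where w: "w \<in> Fs 0 - R" using blk_ne[of 0] N2 by auto
  have b: "set_less (Fs 0 - R) (Fs a - R)" using blk_less[of 0 a] a False by simp
  show ?thesis unfolding set_less_def
  proof (intro ballI)
    fix x y assume "x \<in> R" "y \<in> Fs a - R"
    then have "x < w" "w < y" using R0 b w unfolding set_less_def by auto
    then show "x < y" by simp
  qed
qed

lemma pos_R:
  assumes "y \<in> R"
  shows "card (E \<inter> {..y}) \<le> rr"
proof -
  have "E \<inter> {..y} \<subseteq> R"
  proof
    fix z assume z: "z \<in> E \<inter> {..y}"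
    then obtain a where a: "a < N" "z \<in> Fs a" using Edef by auto
    show "z \<in> R"
    proof (rule ccontr)
      assume "z \<notin> R"
      then have "y < z" using R_less[OF a(1)] a(2) assms unfolding set_less_def by auto
      then show False using z by auto
    qed
  qed
  then show ?thesis using finR cR card_mono by blast
qed

lemma pos_blk:
  assumes i: "i < N" and y: "y \<in> Fs i - R"
  shows "rr + i * (M - rr) < card (E \<inter> {..y}) \<and> card (E \<inter> {..y}) \<le> rr + Suc i * (M - rr)"
proof -
  define U where "U = (\<Union>a<i. Fs a - R)"
  define V where "V = (Fs i - R) \<inter> {..y}"
  have eq: "E \<inter> {..y} = R \<union> U \<union> V"
  proof
    show "E \<inter> {..y} \<subseteq> R \<union> U \<union> V"
    proof
      fix z assume z: "z \<in> E \<inter> {..y}"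
      then obtain a where a: "a < N" "z \<in> Fs a" using Edef by auto
      show "z \<in> R \<union> U \<union> V"
      proof (cases "z \<in> R")
        case True then show ?thesis by auto
      next
        case False
        consider "a < i" | "a = i" | "i < a" by linarith
        then show ?thesis
        proof cases
          case 1 then show ?thesis using a False unfolding U_def by auto
        next
          case 2 then show ?thesis using a False z unfolding V_def by auto
        next
          case 3
          then have "y < z" using blk_less[OF 3 a(1)] y a(2) False unfolding set_less_def by auto
          then show ?thesis using z by auto
        qed
      qed
    qed
    show "R \<union> U \<union> V \<subseteq> E \<inter> {..y}"
    proof
      fix z assume z: "z \<in> R \<union> U \<union> V"
      then consider "z \<in> R" | "z \<in> U" | "z \<in> V" by blast
      then show "z \<in> E \<inter> {..y}"
      proof cases
        case 1
        then have "z < y" using R_less[OF i] y unfolding set_less_def by auto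
        moreover have "z \<in> E" using 1 RsubF[OF i] i Edef by auto
        ultimately show ?thesis by auto
      next
        case 2
        then obtain a where a: "a < i" "z \<in> Fs a - R" unfolding U_def by auto
        then have "z < y" using blk_less[OF a(1) i] y unfolding set_less_def by auto
        moreover have "z \<in> E" using a i Edef by auto
        ultimately show ?thesis by auto
      next
        case 3 then show ?thesis using i Edef unfolding V_def by auto
      qed
    qed
  qed
  have finU: "finite U" unfolding U_def using fin i by auto
  have finV: "finite V" unfolding V_def using fin i by auto
  have cU: "card U = i * (M - rr)"
  proof -
    have "card U = (\<Sum>a<i. card (Fs a - R))"
      unfolding U_def
    proof (rule card_UN_disjoint)
      show "finite {..<i}" by simp
      show "\<forall>a\<in>{..<i}. finite (Fs a - R)" using fin i by auto
      show "\<forall>a\<in>{..<i}. \<forall>b\<in>{..<i}. a \<noteq> b \<longrightarrow> (Fs a - R) \<inter> (Fs b - R) = {}"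
      proof (intro ballI impI)
        fix a b assume ab: "a \<in> {..<i}" "b \<in> {..<i}" "a \<noteq> b"
        then have "Fs a \<inter> Fs b = R" using inter i by auto
        then show "(Fs a - R) \<inter> (Fs b - R) = {}" by blast
      qed
    qed
    also have "\<dots> = (\<Sum>a<i. M - rr)" using blk_card i by (intro sum.cong) auto
    finally show ?thesis by simp
  qed
  have d1: "R \<inter> U = {}" unfolding U_def by auto
  have d2: "(R \<union> U) \<inter> V = {}"
  proof -
    have "U \<inter> V = {}"
    proof -
      have "(Fs a - R) \<inter> (Fs i - R) = {}" if "a < i" for a
      proof -
        have "Fs a \<inter> Fs i = R" using inter i that by auto
        then show ?thesis by blast
      qed
      then show ?thesis unfolding U_def V_def by blast
    qed
    then show ?thesis unfolding V_def by auto
  qed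
  have "card (E \<inter> {..y}) = card R + card U + card V"
    unfolding eq using finR finU finV d1 d2
    by (simp add: card_Un_disjoint)
  moreover have "1 \<le> card V" using y finV unfolding V_def by (metis IntI atMost_iff card_0_eq empty_iff less_one not_le order_refl)
  moreover have "card V \<le> M - rr" using blk_card[OF i] fin i unfolding V_def
    by (metis Int_lower1 card_mono finite_Diff)
  ultimately show ?thesis using cR cU by simp
qed

lemma pos_gt: "i < N \<Longrightarrow> y \<in> Fs i - R \<Longrightarrow> rr < card (E \<inter> {..y})"
  using pos_blk by fastforce

lemma mem_iff:
  assumes i: "i < N" and y: "y \<in> E"
  shows "y \<in> Fs i \<longleftrightarrow> (card (E \<inter> {..y}) \<le> rr \<or>
     (rr + i * (M - rr) < card (E \<inter> {..y}) \<and> card (E \<inter> {..y}) \<le> rr + Suc i * (M - rr)))"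
proof
  assume "y \<in> Fs i"
  then show "card (E \<inter> {..y}) \<le> rr \<or>
     (rr + i * (M - rr) < card (E \<inter> {..y}) \<and> card (E \<inter> {..y}) \<le> rr + Suc i * (M - rr))"
    using pos_R pos_blk[OF i] by blast
next
  assume h: "card (E \<inter> {..y}) \<le> rr \<or>
     (rr + i * (M - rr) < card (E \<inter> {..y}) \<and> card (E \<inter> {..y}) \<le> rr + Suc i * (M - rr))"
  obtain a where a: "a < N" "y \<in> Fs a" using y Edef by auto
  show "y \<in> Fs i"
  proof (cases "y \<in> R")
    case True then show ?thesis using RsubF[OF i] by auto
  next
    case False
    then have pa: "rr + a * (M - rr) < card (E \<inter> {..y}) \<and> card (E \<inter> {..y}) \<le> rr + Suc a * (M - rr)"
      using pos_blk[OF a(1)] a(2) by auto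
    then have pi: "rr + i * (M - rr) < card (E \<inter> {..y}) \<and> card (E \<inter> {..y}) \<le> rr + Suc i * (M - rr)"
      using h by auto
    have "a = i"
    proof (rule ccontr)
      assume "a \<noteq> i"
      then consider "a < i" | "i < a" by linarith
      then show False
      proof cases
        case 1
        then have "Suc a * (M - rr) \<le> i * (M - rr)" by (intro mult_le_mono1) simp
        then show False using pa pi by linarith
      next
        case 2
        then have "Suc i * (M - rr) \<le> a * (M - rr)" by (intro mult_le_mono1) simp
        then show False using pa pi by linarith
      qed
    qed
    then show ?thesis using a by simp
  qed
qed

end

lemma incr_pos:
  fixes E F :: "'a::linorder set"
  assumes "incr_bij E F \<phi>" "finite E" "x \<in> E"
  shows "card (F \<inter> {..\<phi> x}) = card (E \<inter> {..x})"
proof -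
  have bij: "bij_betw \<phi> E F" and sm: "strict_mono_on E \<phi>" using assms(1) unfolding incr_bij_def by auto
  have "\<phi> ` (E \<inter> {..x}) = F \<inter> {..\<phi> x}"
  proof
    show "\<phi> ` (E \<inter> {..x}) \<subseteq> F \<inter> {..\<phi> x}"
    proof
      fix w assume "w \<in> \<phi> ` (E \<inter> {..x})"
      then obtain z where z: "z \<in> E" "z \<le> x" "w = \<phi> z" by auto
      have "\<phi> z \<le> \<phi> x"
      proof (cases "z = x")
        case False
        then have "z < x" using z(2) by simp
        then show ?thesis using strict_mono_onD[OF sm z(1) assms(3)] by simp
      qed simp
      moreover have "\<phi> z \<in> F" using z(1) bij unfolding bij_betw_def by blast
      ultimately show "w \<in> F \<inter> {..\<phi> x}" using z(3) by simp
    qed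
    show "F \<inter> {..\<phi> x} \<subseteq> \<phi> ` (E \<inter> {..x})"
    proof
      fix w assume w: "w \<in> F \<inter> {..\<phi> x}"
      then have "w \<in> \<phi> ` E" using bij unfolding bij_betw_def by auto
      then obtain z where z: "z \<in> E" "w = \<phi> z" by auto
      have "z \<le> x"
      proof (rule ccontr)
        assume "\<not> z \<le> x"
        then have "\<phi> x < \<phi> z" using strict_mono_onD[OF sm assms(3) z(1)] by simp
        then show False using w z by auto
      qed
      then show "w \<in> \<phi> ` (E \<inter> {..x})" using z by auto
    qed
  qed
  moreover have "inj_on \<phi> (E \<inter> {..x})" using bij unfolding bij_betw_def by (auto intro: inj_on_subset)
  ultimately show ?thesis using card_image by fastforce
qed

context cs begin

lemma decomp_blocks:
  assumes "decomp FF n r k F Fs R"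
  shows "blocks Fs (n (Suc k)) (m k) (r (Suc k)) R F"
proof -
  have d: "\<forall>i<n (Suc k). Fs i \<in> level FF k" "F = (\<Union>i<n (Suc k). Fs i)"
     "\<forall>i<n (Suc k). \<forall>j<n (Suc k). i \<noteq> j \<longrightarrow> Fs i \<inter> Fs j = R"
     "card R = r (Suc k)" "set_less R (Fs 0 - R)"
     "\<forall>i. Suc i < n (Suc k) \<longrightarrow> set_less (Fs i - R) (Fs (Suc i) - R)"
    using assms unfolding decomp_def by blast+
  show ?thesis
  proof (unfold_locales)
    show "\<forall>i<n (Suc k). finite (Fs i)" using d(1) level_fin by blast
    show "\<forall>i<n (Suc k). card (Fs i) = m k" using d(1) level_card by blast
  qed (use d r_less n_ge2 in auto)
qed

lemma iso:
  "E \<in> level FF k \<Longrightarrow> F \<in> level FF k \<Longrightarrow> incr_bij E F \<phi> \<Longrightarrow> x \<in> E \<Longrightarrow> j \<le> k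
   \<Longrightarrow> fseq FF x j = fseq FF (\<phi> x) j"
proof (induction k arbitrary: E F \<phi> x)
  case 0
  then have "j = 0" by simp
  have "\<phi> x \<in> F" using 0 unfolding incr_bij_def unfolding bij_betw_def by blast
  then show ?case using fseq_eq[OF 0(1,4)] fseq_eq[OF 0(2)] incr_pos[OF 0(3) level_fin[OF 0(1)] 0(4)]
    \<open>j = 0\<close> by simp
next
  case (Suc k)
  have px: "\<phi> x \<in> F" using Suc unfolding incr_bij_def unfolding bij_betw_def by blast
  show ?case
  proof (cases "j = Suc k")
    case True
    then show ?thesis using fseq_eq[OF Suc.prems(1,4)] fseq_eq[OF Suc.prems(2) px]
        incr_pos[OF Suc.prems(3) level_fin[OF Suc.prems(1)] Suc.prems(4)] by simp
  next
    case False
    then have jk: "j \<le> k" using Suc.prems by simp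
    obtain Es R where dE: "decomp FF n r k E Es R" using decomp_ex Suc.prems(1) by blast
    obtain Fs R' where dF: "decomp FF n r k F Fs R'" using decomp_ex Suc.prems(2) by blast
    interpret bE: blocks Es "n (Suc k)" "m k" "r (Suc k)" R E using decomp_blocks[OF dE] .
    interpret bF: blocks Fs "n (Suc k)" "m k" "r (Suc k)" R' F using decomp_blocks[OF dF] .
    obtain i where i: "i < n (Suc k)" "x \<in> Es i" using Suc.prems(4) bE.Edef by auto
    have bij: "bij_betw \<phi> E F" and sm: "strict_mono_on E \<phi>" using Suc.prems(3) unfolding incr_bij_def by auto
    have EsE: "Es i \<subseteq> E" using bE.Edef i by auto
    have sub: "\<phi> ` Es i \<subseteq> Fs i"
    proof
      fix w assume "w \<in> \<phi> ` Es i"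
      then obtain y where y: "y \<in> Es i" "w = \<phi> y" by auto
      have yE: "y \<in> E" using y EsE by auto
      have wF: "w \<in> F" using y yE bij unfolding bij_betw_def by blast
      have "card (F \<inter> {..w}) = card (E \<inter> {..y})" using incr_pos[OF Suc.prems(3) bE.finE yE] y by simp
      then show "w \<in> Fs i" using bE.mem_iff[OF i(1) yE] bF.mem_iff[OF i(1) wF] y(1) by simp
    qed
    have injE: "inj_on \<phi> (Es i)" using bij EsE bij_betw_imp_inj_on inj_on_subset by blast
    have "card (\<phi> ` Es i) = card (Fs i)"
      using card_image[OF injE] bE.cardF bF.cardF i by simp
    then have img: "\<phi> ` Es i = Fs i" using sub bF.fin i by (meson card_subset_eq)
    have ib: "incr_bij (Es i) (Fs i) \<phi>"
      unfolding incr_bij_def using img injE monotone_on_subset[OF sm EsE]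
      by (simp add: bij_betw_def)
    have lv: "Es i \<in> level FF k" "Fs i \<in> level FF k" using dE dF i unfolding decomp_def by auto
    show ?thesis using Suc.IH[OF lv ib i(2) jk] .
  qed
qed

end

context cs begin

lemma no_cal:
  assumes cap: "two_capturing FF n r"
    and G: "uncountable \<Gamma>"
    and fa: "\<forall>\<delta>\<in>\<Gamma>. finite {\<gamma>\<in>\<Gamma>. fseq FF \<gamma> \<le> fseq FF \<delta>}"
  shows False
proof -
  define A where "A = (\<lambda>\<delta>. {\<gamma>\<in>\<Gamma>. fseq FF \<gamma> \<le> fseq FF \<delta>})"
  define S where "S = A ` \<Gamma>"
  have injA: "inj_on A \<Gamma>"
  proof (rule inj_onI)
    fix x y assume xy: "x \<in> \<Gamma>" "y \<in> \<Gamma>" "A x = A y"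
    then have "x \<in> A y" "y \<in> A x" unfolding A_def by auto
    then have "x \<le> y" "y \<le> x" unfolding A_def using fseq_le_imp by auto
    then show "x = y" by simp
  qed
  have "uncountable S"
  proof
    assume "countable S"
    then have "countable \<Gamma>" unfolding S_def using injA by (rule countable_image_inj_on)
    then show False using G by simp
  qed
  moreover have "S \<subseteq> {A. finite A}" unfolding S_def A_def using fa by auto
  ultimately have "S \<subseteq> {A. finite A} \<and> uncountable S" by simp
  then have "\<forall>k. \<exists>C\<subseteq>S. card C = 2 \<and> (\<exists>l>k. \<exists>F\<in>level FF l. captures FF n r l F C)"
    using cap[unfolded two_capturing_def, rule_format] by blast
  then have "\<exists>C\<subseteq>S. card C = 2 \<and> (\<exists>l>0. \<exists>F\<in>level FF l. captures FF n r l F C)" by (rule spec)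
  then obtain C where C: "C \<subseteq> S" "card C = 2" and ex: "\<exists>l>0. \<exists>F\<in>level FF l. captures FF n r l F C"
    by blast
  from ex obtain l F where lF: "l > 0" "F \<in> level FF l" "captures FF n r l F C" by (elim exE conjE bexE)
  obtain Fs R c where d: "decomp FF n r (l - 1) F Fs R" and Cc: "C = c ` {..<card C}"
    and ic: "inj_on c {..<card C}"
    and cc: "\<forall>i<card C. c i \<subseteq> Fs i \<and> c i - R \<noteq> {} \<and> (\<exists>\<phi>. incr_bij (Fs 0) (Fs i) \<phi> \<and> \<phi> ` c 0 = c i)"
    and nl: "card C \<le> n l"
    using lF(3) unfolding captures_def by (elim conjE exE) (intro that)
  define l' where "l' = l - 1"
  have ll: "l = Suc l'" using lF(1) unfolding l'_def by simp
  have d': "decomp FF n r l' F Fs R" using d unfolding l'_def .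
  interpret b: blocks Fs "n (Suc l')" "m l'" "r (Suc l')" R F using decomp_blocks[OF d'] .
  have n1: "1 < n (Suc l')" using nl C(2) ll by simp
  have c0S: "c 0 \<in> S" and c1S: "c 1 \<in> S" using Cc C by (auto simp: image_subset_iff)
  obtain \<gamma> where g: "\<gamma> \<in> \<Gamma>" "c 0 = A \<gamma>" using c0S unfolding S_def by auto
  obtain \<delta> where dl: "\<delta> \<in> \<Gamma>" "c 1 = A \<delta>" using c1S unfolding S_def by auto
  have C01: "0 < card C" "1 < card C" using C(2) by simp_all
  have cc0: "c 0 \<subseteq> Fs 0 \<and> c 0 - R \<noteq> {} \<and> (\<exists>\<phi>. incr_bij (Fs 0) (Fs 0) \<phi> \<and> \<phi> ` c 0 = c 0)"
    using cc[rule_format, OF C01(1)] .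
  have cc1: "c 1 \<subseteq> Fs 1 \<and> c 1 - R \<noteq> {} \<and> (\<exists>\<phi>. incr_bij (Fs 0) (Fs 1) \<phi> \<and> \<phi> ` c 0 = c 1)"
    using cc[rule_format, OF C01(2)] .
  have c0: "c 0 \<subseteq> Fs 0" "c 0 - R \<noteq> {}" using cc0 by simp_all
  have c1: "c 1 \<subseteq> Fs 1" using cc1 by simp
  have "\<exists>\<phi>. incr_bij (Fs 0) (Fs 1) \<phi> \<and> \<phi> ` c 0 = c 1" using cc1 by (elim conjE)
  then obtain \<phi> where phi: "incr_bij (Fs 0) (Fs 1) \<phi>" "\<phi> ` c 0 = c 1" by blast
  have sm: "strict_mono_on (Fs 0) \<phi>" using phi(1) unfolding incr_bij_def by auto
  have gA: "\<gamma> \<in> A \<gamma>" unfolding A_def using g by auto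
  have dA: "\<delta> \<in> A \<delta>" unfolding A_def using dl by auto
  have belowA: "\<And>z x. z \<in> A x \<Longrightarrow> z \<le> x" unfolding A_def using fseq_le_imp by auto
  have gF0: "\<gamma> \<in> Fs 0" using gA g c0 by auto
  have gR: "\<gamma> \<notin> R"
  proof
    assume "\<gamma> \<in> R"
    obtain z where z: "z \<in> c 0" "z \<notin> R" using c0(2) by auto
    then have "\<gamma> < z" using b.R_less[of 0] n1 c0(1) \<open>\<gamma> \<in> R\<close> unfolding set_less_def by auto
    moreover have "z \<le> \<gamma>" using belowA z g by auto
    ultimately show False by simp
  qed
  have pg: "\<phi> \<gamma> \<in> c 1" using phi(2) gA g by auto
  then have "\<phi> \<gamma> \<le> \<delta>" using belowA dl by auto
  moreover have "\<delta> \<le> \<phi> \<gamma>"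
  proof -
    obtain z where z: "z \<in> c 0" "\<delta> = \<phi> z" using dA dl phi(2) by auto
    have "z \<le> \<gamma>" using belowA z g by auto
    then show ?thesis
    proof (cases "z = \<gamma>")
      case False
      then have "z < \<gamma>" using \<open>z \<le> \<gamma>\<close> by simp
      have "z \<in> Fs 0" using z(1) c0(1) by auto
      then have "\<phi> z < \<phi> \<gamma>" using strict_mono_onD[OF sm _ gF0 \<open>z < \<gamma>\<close>] by simp
      then show ?thesis using z(2) by simp
    qed (use z in simp)
  qed
  ultimately have dg: "\<delta> = \<phi> \<gamma>" by simp
  have dF1: "\<delta> \<in> Fs 1" using pg dg c1 by auto
  have dR: "\<delta> \<notin> R"
  proof
    assume dR: "\<delta> \<in> R"
    have "Fs 1 \<inter> {..\<delta>} \<subseteq> R"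
    proof
      fix z assume z: "z \<in> Fs 1 \<inter> {..\<delta>}"
      show "z \<in> R"
      proof (rule ccontr)
        assume "z \<notin> R"
        then have "\<delta> < z" using b.R_less[of 1] n1 z dR unfolding set_less_def by auto
        then show False using z by auto
      qed
    qed
    then have "card (Fs 1 \<inter> {..\<delta>}) \<le> card R" by (rule card_mono[OF b.finR])
    then have "card (Fs 1 \<inter> {..\<delta>}) \<le> r (Suc l')" using b.cR by simp
    moreover have "insert \<gamma> R \<subseteq> Fs 0 \<inter> {..\<gamma>}"
    proof -
      have "R \<subseteq> Fs 0" using b.RsubF n1 by auto
      moreover have "\<forall>x\<in>R. x < \<gamma>" using b.R_less[of 0] n1 gF0 gR unfolding set_less_def by auto
      ultimately show ?thesis using gF0 by auto
    qed
    then have "card (insert \<gamma> R) \<le> card (Fs 0 \<inter> {..\<gamma>})"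
      using b.fin n1 by (intro card_mono) auto
    then have "Suc (r (Suc l')) \<le> card (Fs 0 \<inter> {..\<gamma>})" using gR b.finR b.cR by simp
    moreover have "card (Fs 1 \<inter> {..\<delta>}) = card (Fs 0 \<inter> {..\<gamma>})"
      using incr_pos[OF phi(1) _ gF0] b.fin n1 dg by auto
    ultimately show False by simp
  qed
  have lt: "\<gamma> < \<delta>" using b.blk_less[of 0 1] n1 gF0 gR dF1 dR unfolding set_less_def by auto
  have lvall: "\<forall>i<n (Suc l'). Fs i \<in> level FF l'" using d' unfolding decomp_def by (elim conjE)
  have lv: "Fs 0 \<in> level FF l'" "Fs 1 \<in> level FF l'" using lvall n1 by simp_all
  have "Fs 0 \<subseteq> (\<Union>i<n (Suc l'). Fs i)" "Fs 1 \<subseteq> (\<Union>i<n (Suc l'). Fs i)"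
    by (rule UN_upper, use n1 in simp)+
  then have gFF: "\<gamma> \<in> F" "\<delta> \<in> F" using gF0 dF1 b.Edef by auto
  have "fseq FF \<gamma> \<le> fseq FF \<delta>"
    unfolding le_fun_def
  proof
    fix j show "fseq FF \<gamma> j \<le> fseq FF \<delta> j"
    proof (cases "j \<le> l'")
      case True
      then show ?thesis using iso[OF lv phi(1) gF0 True] dg by simp
    next
      case False
      then show ?thesis using fseq_mono_level[OF lF(2) gFF _ ] lt ll by simp
    qed
  qed
  then have "\<gamma> \<in> A \<delta>" unfolding A_def using g by auto
  then have "\<gamma> \<in> Fs 1" using dl c1 by auto
  moreover have "Fs 0 \<inter> Fs 1 = R" using b.inter n1 by simp
  ultimately have "\<gamma> \<in> R" using gF0 by blast
  then show False using gR by simp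
qed

end

locale cs1 = cs FF m n r for FF :: "'a::wellorder set set" and m n r +
  assumes unc: "uncountable (UNIV :: 'a::wellorder set)" and cnt: "\<forall>x::'a::wellorder. countable {y. y < x}"
begin

lemma cnt_le: "countable {y. y \<le> (\<delta>::'a)}"
proof -
  have "{y. y \<le> \<delta>} = insert \<delta> {y. y < \<delta>}" by auto
  then show ?thesis using cnt by simp
qed

lemma bound:
  assumes "countable (Q::'a set)"
  shows "\<exists>e. \<forall>q\<in>Q. q \<le> e"
proof -
  have "countable (\<Union>q\<in>Q. {y. y \<le> q})" using assms cnt_le by blast
  then have "(\<Union>q\<in>Q. {y. y \<le> q}) \<noteq> UNIV" using unc by force
  then obtain e where "e \<notin> (\<Union>q\<in>Q. {y. y \<le> q})" by blast
  then have "\<forall>q\<in>Q. q \<le> e" using le_cases by auto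
  then show ?thesis by blast
qed

lemma below_cnt: "countable {\<alpha>. fseq FF \<alpha> \<le> fseq FF \<delta>}"
proof -
  have "{\<alpha>. fseq FF \<alpha> \<le> fseq FF \<delta>} \<subseteq> {y. y \<le> (\<delta>::'a)}" using fseq_le_imp by blast
  then show ?thesis using cnt_le[of \<delta>] by (rule countable_subset)
qed

lemma unbounded:
  assumes G: "uncountable \<Gamma>"
  shows "\<exists>Q\<subseteq>\<Gamma>. countable Q \<and> (\<forall>\<delta>. \<exists>\<alpha>\<in>Q. \<not> fseq FF \<alpha> \<le> fseq FF \<delta>)"
proof -
  define V where "V = (\<lambda>j. (\<lambda>\<alpha>. fseq FF \<alpha> j) ` \<Gamma>)"
  have ne: "\<Gamma> \<noteq> {}" using G by auto
  have finV: "finite (V j)" for j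
  proof -
    have "V j \<subseteq> {..m j}" unfolding V_def using fseq_le_m by auto
    then show ?thesis using finite_subset by blast
  qed
  have "\<forall>j. \<exists>a\<in>\<Gamma>. fseq FF a j = Max (V j)"
  proof
    fix j
    have "Max (V j) \<in> V j" using finV ne unfolding V_def by (intro Max_in) auto
    then show "\<exists>a\<in>\<Gamma>. fseq FF a j = Max (V j)" unfolding V_def by auto
  qed
  then obtain a where a: "\<forall>j. a j \<in> \<Gamma> \<and> fseq FF (a j) j = Max (V j)" by metis
  define Q where "Q = range a"
  have "Q \<subseteq> \<Gamma>" "countable Q" unfolding Q_def using a by auto
  moreover have "\<forall>\<delta>. \<exists>\<alpha>\<in>Q. \<not> fseq FF \<alpha> \<le> fseq FF \<delta>"
  proof (rule ccontr)
    assume "\<not> (\<forall>\<delta>. \<exists>\<alpha>\<in>Q. \<not> fseq FF \<alpha> \<le> fseq FF \<delta>)"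
    then obtain \<delta> where dl: "\<forall>\<alpha>\<in>Q. fseq FF \<alpha> \<le> fseq FF \<delta>" by auto
    have "\<Gamma> \<subseteq> {\<alpha>. fseq FF \<alpha> \<le> fseq FF \<delta>}"
    proof
      fix \<alpha> assume al: "\<alpha> \<in> \<Gamma>"
      have "fseq FF \<alpha> j \<le> fseq FF \<delta> j" for j
      proof -
        have "fseq FF \<alpha> j \<le> Max (V j)" using finV al unfolding V_def by auto
        also have "\<dots> = fseq FF (a j) j" using a by simp
        also have "\<dots> \<le> fseq FF \<delta> j" using dl unfolding Q_def le_fun_def by auto
        finally show ?thesis .
      qed
      then show "\<alpha> \<in> {\<alpha>. fseq FF \<alpha> \<le> fseq FF \<delta>}" by (simp add: le_fun_def)
    qed
    then show False using below_cnt G countable_subset by blast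
  qed
  ultimately show ?thesis by blast
qed

end

context cs1 begin

lemma dpo: "directed_po (range (fseq FF)) (\<le>)"
  unfolding directed_po_def
proof (intro conjI ballI impI)
  fix x y assume "x \<in> range (fseq FF)" "y \<in> range (fseq FF)"
  then obtain \<alpha> \<beta> where "x = fseq FF \<alpha>" "y = fseq FF \<beta>" by auto
  then show "\<exists>z\<in>range (fseq FF). x \<le> z \<and> y \<le> z" using directed[of \<alpha> \<beta>] by auto
qed auto

lemma bij: "\<exists>g. bij_betw g (UNIV :: 'a set) (range (fseq FF))"
  using fseq_inj by (intro exI[of _ "fseq FF"]) (simp add: bij_betw_def)

lemma t1: "\<not> tukey_le (range (fseq FF)) (\<le>) {()} (=)"
proof
  assume "tukey_le (range (fseq FF)) (\<le>) {()} (=)"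
  then obtain \<phi> where p: "\<phi> ` {()} \<subseteq> range (fseq FF)"
    "\<forall>C. cofinal_in {()} (=) C \<longrightarrow> cofinal_in (range (fseq FF)) (\<le>) (\<phi> ` C)"
    unfolding tukey_le_def by blast
  have "cofinal_in {()} (=) {()}" unfolding cofinal_in_def by auto
  then have "cofinal_in (range (fseq FF)) (\<le>) (\<phi> ` {()})" using p(2) by blast
  then have all: "\<forall>\<alpha>. fseq FF \<alpha> \<le> \<phi> ()" unfolding cofinal_in_def by auto
  obtain \<delta> where "\<phi> () = fseq FF \<delta>" using p(1) by auto
  then have "UNIV \<subseteq> {\<alpha>. fseq FF \<alpha> \<le> fseq FF \<delta>}" using all by auto
  then show False using below_cnt unc countable_subset by blast
qed

lemma t2: "\<not> tukey_le (range (fseq FF)) (\<le>) (UNIV :: nat set) (\<le>)"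
proof
  assume "tukey_le (range (fseq FF)) (\<le>) (UNIV :: nat set) (\<le>)"
  then obtain \<phi> :: "nat \<Rightarrow> _" where p: "\<phi> ` UNIV \<subseteq> range (fseq FF)"
    "\<forall>C. cofinal_in UNIV (\<le>) C \<longrightarrow> cofinal_in (range (fseq FF)) (\<le>) (\<phi> ` C)"
    unfolding tukey_le_def by blast
  have "cofinal_in (UNIV::nat set) (\<le>) UNIV" unfolding cofinal_in_def by auto
  then have "cofinal_in (range (fseq FF)) (\<le>) (\<phi> ` UNIV)" using p(2) by blast
  then have all: "\<forall>\<alpha>. \<exists>k. fseq FF \<alpha> \<le> \<phi> k" unfolding cofinal_in_def by auto
  have "\<forall>k. \<exists>\<delta>. \<phi> k = fseq FF \<delta>" using p(1) by auto
  then obtain d where d: "\<forall>k. \<phi> k = fseq FF (d k)" by metis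
  have "UNIV \<subseteq> (\<Union>k. {\<alpha>. fseq FF \<alpha> \<le> fseq FF (d k)})" using all d by auto
  moreover have "countable (\<Union>k. {\<alpha>. fseq FF \<alpha> \<le> fseq FF (d k)})" using below_cnt by blast
  ultimately show False using unc countable_subset by blast
qed

lemma t3: "\<not> tukey_le (range (fseq FF)) (\<le>) (UNIV :: 'a set) (\<le>)"
proof
  assume "tukey_le (range (fseq FF)) (\<le>) (UNIV :: 'a set) (\<le>)"
  then obtain \<phi> :: "'a \<Rightarrow> _" where p: "\<phi> ` UNIV \<subseteq> range (fseq FF)"
    "\<forall>C. cofinal_in UNIV (\<le>) C \<longrightarrow> cofinal_in (range (fseq FF)) (\<le>) (\<phi> ` C)"
    unfolding tukey_le_def by blast
  have "\<exists>e. \<forall>c. e \<le> c \<longrightarrow> b \<le> \<phi> c" if b: "b \<in> range (fseq FF)" for b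
  proof (rule ccontr)
    assume h: "\<not> (\<exists>e. \<forall>c. e \<le> c \<longrightarrow> b \<le> \<phi> c)"
    let ?C = "{c. \<not> b \<le> \<phi> c}"
    have "cofinal_in UNIV (\<le>) ?C" unfolding cofinal_in_def using h by auto
    then have "cofinal_in (range (fseq FF)) (\<le>) (\<phi> ` ?C)" using p(2) by blast
    then show False using b unfolding cofinal_in_def by auto
  qed
  then have "\<forall>\<alpha>. \<exists>e. \<forall>c. e \<le> c \<longrightarrow> fseq FF \<alpha> \<le> \<phi> c" by blast
  then obtain e where e: "\<forall>\<alpha>. \<forall>c. e \<alpha> \<le> c \<longrightarrow> fseq FF \<alpha> \<le> \<phi> c" by (rule choice[THEN exE])
  obtain Q where Q: "countable Q" "\<forall>\<delta>. \<exists>\<alpha>\<in>Q. \<not> fseq FF \<alpha> \<le> fseq FF \<delta>"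
    using unbounded[OF unc] by blast
  obtain e' where e': "\<forall>q\<in>e ` Q. q \<le> e'" using bound[of "e ` Q"] Q(1) by blast
  obtain \<delta> where dl: "\<phi> e' = fseq FF \<delta>" using p(1) by auto
  obtain \<alpha> where "\<alpha> \<in> Q" "\<not> fseq FF \<alpha> \<le> fseq FF \<delta>" using Q(2) by blast
  moreover have "fseq FF \<alpha> \<le> \<phi> e'" using e e' \<open>\<alpha> \<in> Q\<close> by blast
  ultimately show False using dl by simp
qed

lemma t4: "\<not> tukey_le (range (fseq FF)) (\<le>) (UNIV :: (nat \<times> 'a) set) prod_le"
proof
  assume "tukey_le (range (fseq FF)) (\<le>) (UNIV :: (nat \<times> 'a) set) prod_le"
  then obtain \<phi> :: "nat \<times> 'a \<Rightarrow> _" where p: "\<phi> ` UNIV \<subseteq> range (fseq FF)"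
    "\<forall>C. cofinal_in UNIV prod_le C \<longrightarrow> cofinal_in (range (fseq FF)) (\<le>) (\<phi> ` C)"
    unfolding tukey_le_def by blast
  have "\<exists>e. \<forall>c. prod_le e c \<longrightarrow> b \<le> \<phi> c" if b: "b \<in> range (fseq FF)" for b
  proof (rule ccontr)
    assume h: "\<not> (\<exists>e. \<forall>c. prod_le e c \<longrightarrow> b \<le> \<phi> c)"
    let ?C = "{c. \<not> b \<le> \<phi> c}"
    have "cofinal_in UNIV prod_le ?C" unfolding cofinal_in_def using h by blast
    then have "cofinal_in (range (fseq FF)) (\<le>) (\<phi> ` ?C)" using p(2) by blast
    then show False using b unfolding cofinal_in_def by auto
  qed
  then have "\<forall>\<alpha>. \<exists>e. \<forall>c. prod_le e c \<longrightarrow> fseq FF \<alpha> \<le> \<phi> c" by blast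
  then obtain e where e: "\<forall>\<alpha>. \<forall>c. prod_le (e \<alpha>) c \<longrightarrow> fseq FF \<alpha> \<le> \<phi> c" by (rule choice[THEN exE])
  have "UNIV = (\<Union>N. {\<alpha>. fst (e \<alpha>) = N})" by auto
  have "\<exists>N. uncountable {\<alpha>. fst (e \<alpha>) = N}"
  proof (rule ccontr)
    assume "\<not> (\<exists>N. uncountable {\<alpha>. fst (e \<alpha>) = N})"
    then have "countable (\<Union>N. {\<alpha>. fst (e \<alpha>) = N})" by (intro countable_UN) auto
    then show False using unc \<open>UNIV = _\<close> by simp
  qed
  then obtain N where N: "uncountable {\<alpha>. fst (e \<alpha>) = N}" by blast
  obtain Q where Q: "Q \<subseteq> {\<alpha>. fst (e \<alpha>) = N}" "countable Q" "\<forall>\<delta>. \<exists>\<alpha>\<in>Q. \<not> fseq FF \<alpha> \<le> fseq FF \<delta>"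
    using unbounded[OF N] by blast
  obtain e' where e': "\<forall>q\<in>(snd \<circ> e) ` Q. q \<le> e'" using bound[of "(snd \<circ> e) ` Q"] Q(2) by blast
  obtain \<delta> where dl: "\<phi> (N, e') = fseq FF \<delta>" using p(1) by auto
  obtain \<alpha> where a: "\<alpha> \<in> Q" "\<not> fseq FF \<alpha> \<le> fseq FF \<delta>" using Q(3) by blast
  have "prod_le (e \<alpha>) (N, e')" unfolding prod_le_def using a(1) Q(1) e' by auto
  then have "fseq FF \<alpha> \<le> \<phi> (N, e')" using e by blast
  then show False using dl a by simp
qed

lemma t5:
  assumes cap: "two_capturing FF n r"
  shows "\<not> tukey_le {A :: 'a set. finite A} (\<subseteq>) (range (fseq FF)) (\<le>)"
proof
  assume "tukey_le {A :: 'a set. finite A} (\<subseteq>) (range (fseq FF)) (\<le>)"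
  then obtain \<psi> where p: "\<psi> ` range (fseq FF) \<subseteq> {A :: 'a set. finite A}"
    "\<forall>C. cofinal_in (range (fseq FF)) (\<le>) C \<longrightarrow> cofinal_in {A. finite A} (\<subseteq>) (\<psi> ` C)"
    unfolding tukey_le_def by blast
  have "\<exists>h. \<forall>b\<in>range (fseq FF). fseq FF h \<le> b \<longrightarrow> \<alpha> \<in> \<psi> b" for \<alpha>
  proof (rule ccontr)
    assume h: "\<not> (\<exists>h. \<forall>b\<in>range (fseq FF). fseq FF h \<le> b \<longrightarrow> \<alpha> \<in> \<psi> b)"
    let ?C = "{b\<in>range (fseq FF). \<alpha> \<notin> \<psi> b}"
    have "cofinal_in (range (fseq FF)) (\<le>) ?C" unfolding cofinal_in_def using h by auto
    then have "cofinal_in {A. finite A} (\<subseteq>) (\<psi> ` ?C)" using p(2) by blast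
    then have "\<forall>d\<in>{A. finite A}. \<exists>c'\<in>\<psi> ` ?C. d \<subseteq> c'" unfolding cofinal_in_def by (elim conjE)
    moreover have "{\<alpha>} \<in> {A. finite A}" by simp
    ultimately have "\<exists>c'\<in>\<psi> ` ?C. {\<alpha>} \<subseteq> c'" by (rule bspec)
    then obtain c where "c \<in> ?C" "{\<alpha>} \<subseteq> \<psi> c" by (elim bexE imageE) simp
    then show False by simp
  qed
  then have "\<forall>\<alpha>. \<exists>h. \<forall>b\<in>range (fseq FF). fseq FF h \<le> b \<longrightarrow> \<alpha> \<in> \<psi> b" by blast
  then obtain h where h: "\<forall>\<alpha>. \<forall>b\<in>range (fseq FF). fseq FF (h \<alpha>) \<le> b \<longrightarrow> \<alpha> \<in> \<psi> b"
    by (rule choice[THEN exE])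
  have fin: "finite {\<alpha>. fseq FF (h \<alpha>) \<le> fseq FF \<delta>}" for \<delta>
  proof -
    have "{\<alpha>. fseq FF (h \<alpha>) \<le> fseq FF \<delta>} \<subseteq> \<psi> (fseq FF \<delta>)" using h by auto
    moreover have "finite (\<psi> (fseq FF \<delta>))" using p(1) by auto
    ultimately show ?thesis using finite_subset by blast
  qed
  define \<Gamma> where "\<Gamma> = range h"
  have "UNIV = (\<Union>\<gamma>\<in>\<Gamma>. {\<alpha>. h \<alpha> = \<gamma>})" unfolding \<Gamma>_def by auto
  moreover have "countable {\<alpha>. h \<alpha> = \<gamma>}" for \<gamma>
  proof -
    have "{\<alpha>. h \<alpha> = \<gamma>} \<subseteq> {\<alpha>. fseq FF (h \<alpha>) \<le> fseq FF \<gamma>}" by auto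
    then show ?thesis using fin[of \<gamma>] countable_finite finite_subset by blast
  qed
  ultimately have G: "uncountable \<Gamma>"
  proof -
    assume u: "UNIV = (\<Union>\<gamma>\<in>\<Gamma>. {\<alpha>. h \<alpha> = \<gamma>})" and c: "\<And>\<gamma>. countable {\<alpha>. h \<alpha> = \<gamma>}"
    show "uncountable \<Gamma>"
    proof
      assume "countable \<Gamma>"
      then have "countable (\<Union>\<gamma>\<in>\<Gamma>. {\<alpha>. h \<alpha> = \<gamma>})" using c by (intro countable_UN) auto
      then show False using unc u by simp
    qed
  qed
  have "\<forall>\<delta>\<in>\<Gamma>. finite {\<gamma>\<in>\<Gamma>. fseq FF \<gamma> \<le> fseq FF \<delta>}"
  proof
    fix \<delta> assume "\<delta> \<in> \<Gamma>"
    have "{\<gamma>\<in>\<Gamma>. fseq FF \<gamma> \<le> fseq FF \<delta>} \<subseteq> h ` {\<alpha>. fseq FF (h \<alpha>) \<le> fseq FF \<delta>}"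
      unfolding \<Gamma>_def by auto
    then show "finite {\<gamma>\<in>\<Gamma>. fseq FF \<gamma> \<le> fseq FF \<delta>}" using fin finite_subset by blast
  qed
  then show False using no_cal[OF cap G] by blast
qed

end

theorem mainTheorem11:
  fixes \<F> :: "'a::wellorder set set" and m n r :: "nat \<Rightarrow> nat"
  assumes omega1: "uncountable (UNIV :: 'a set)" "\<forall>x::'a. countable {y. y < x}"
    and tau: "is_type m n r"
    and scheme: "construction_scheme \<F> m n r"
    and cap: "two_capturing \<F> n r"
  shows "directed_po (range (fseq \<F>)) (\<le>) \<and>
         (\<exists>g. bij_betw g (UNIV :: 'a set) (range (fseq \<F>))) \<and>
         \<not> tukey_eq (range (fseq \<F>)) (\<le>) {()} (=) \<and>
         \<not> tukey_eq (range (fseq \<F>)) (\<le>) (UNIV :: nat set) (\<le>) \<and>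
         \<not> tukey_eq (range (fseq \<F>)) (\<le>) (UNIV :: 'a set) (\<le>) \<and>
         \<not> tukey_eq (range (fseq \<F>)) (\<le>) (UNIV :: (nat \<times> 'a) set) prod_le \<and>
         \<not> tukey_eq (range (fseq \<F>)) (\<le>) {A :: 'a set. finite A} (\<subseteq>)"
proof -
  have inf: "infinite (UNIV :: 'a set)" using omega1(1) countable_finite by blast
  interpret c: cs1 \<F> m n r
    by unfold_locales (use tau scheme inf omega1 in auto)
  show ?thesis
    unfolding tukey_eq_def
    using c.dpo c.bij c.t1 c.t2 c.t3 c.t4 c.t5[OF cap] by blast
qed

end
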